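(* Let $r$ and $d$ be positive integers, let $\operatorname{Tv}(d,r)=(d+1)(r-1)+1$, and let $S\subset\mathbb{R}^d$ be a finite set of at least $3\operatorname{Tv}(d,r)-1$ points. Then the Tverberg $r$-partition graph $G_T[S,r]$ is connected.
   Context: A partition of a finite set $S$ into $r$ parts is a collection of $r$ nonempty pairwise disjoint subsets $P_1,\dots,P_r$ (unordered) whose union is $S$. For a finite $S\subset\mathbb{R}^d$, a Tverberg partition of $S$ into $r$ parts is a partition $P_1,\dots,P_r$ of $S$ into $r$ parts with $\bigcap_{j=1}^r\operatorname{conv}(P_j)\neq\emptyset$. For two partitions $P,P'$ of $S$, the partition distance $D(P,P')$ is the minimum number of elements of $S$ that must be removed so that $P$ and $P'$ restricted to the remaining elements coincide (equivalently, the minimum number of elements that must be moved from one part to another to transform $P$ into $P'$). The Tverberg $r$-partition graph $G_T[S,r]$ has as vertices all Tverberg partitions of $S$ into $r$ parts, with an edge between $P$ and $P'$ if and only if $D(P,P')=1$. *)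

theory Defs
  imports "HOL-Analysis.Analysis"
begin

definition is_partition :: "'a set \<Rightarrow> nat \<Rightarrow> 'a set set \<Rightarrow> bool" where
  "is_partition S r P \<longleftrightarrow>
     (\<forall>B\<in>P. B \<noteq> {}) \<and>
     (\<forall>B\<in>P. \<forall>C\<in>P. B \<noteq> C \<longrightarrow> B \<inter> C = {}) \<and>
     \<Union>P = S \<and> finite P \<and> card P = r"

definition tverberg_partition :: "('a::real_vector) set \<Rightarrow> nat \<Rightarrow> 'a set set \<Rightarrow> bool" where
  "tverberg_partition S r P \<longleftrightarrow> is_partition S r P \<and> (\<Inter>B\<in>P. convex hull B) \<noteq> {}"

definition restrict_partition :: "'a set set \<Rightarrow> 'a set \<Rightarrow> 'a set set" where
  "restrict_partition P T = (\<lambda>B. B \<inter> T) ` P - {{}}"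

definition partition_distance :: "'a set \<Rightarrow> 'a set set \<Rightarrow> 'a set set \<Rightarrow> nat" where
  "partition_distance S P P' =
     (LEAST k. \<exists>X. X \<subseteq> S \<and> card X = k \<and>
                   restrict_partition P (S - X) = restrict_partition P' (S - X))"

definition Tv :: "nat \<Rightarrow> nat \<Rightarrow> nat" where
  "Tv d r = (d + 1) * (r - 1) + 1"

definition tverberg_graph_edges :: "('a::real_vector) set \<Rightarrow> nat \<Rightarrow> ('a set set \<times> 'a set set) set" where
  "tverberg_graph_edges S r =
     {(P, P'). tverberg_partition S r P \<and> tverberg_partition S r P' \<and>
               partition_distance S P P' = 1}"

definition tverberg_graph_connected :: "('a::real_vector) set \<Rightarrow> nat \<Rightarrow> bool" where
  "tverberg_graph_connected S r \<longleftrightarrow>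
     (\<forall>P P'. tverberg_partition S r P \<longrightarrow> tverberg_partition S r P' \<longrightarrow>
              (P, P') \<in> (tverberg_graph_edges S r)\<^sup>*)"

end

theory Submission
  imports Defs
begin



lemma homog_system_nontrivial:
  fixes A :: "'e \<Rightarrow> 'k \<Rightarrow> real"
  assumes "finite E" "finite U" "card E < card U"
  shows "\<exists>c. (\<exists>k\<in>U. c k \<noteq> 0) \<and> (\<forall>e\<in>E. (\<Sum>k\<in>U. A e k * c k) = 0)"
  using assms
proof (induction E arbitrary: U A rule: finite_induct)
  case empty
  then obtain k where "k \<in> U" by fastforce
  then show ?case by (rule_tac x="\<lambda>_. 1" in exI) auto
next
  case (insert e E U A)
  show ?case
  proof (cases "\<forall>k\<in>U. A e k = 0")
    case True
    have "card E < card U" using insert by simp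
    from insert.IH[OF insert.prems(1) this, of A] obtain c where
      c: "\<exists>k\<in>U. c k \<noteq> 0" "\<forall>e\<in>E. (\<Sum>k\<in>U. A e k * c k) = 0" by blast
    show ?thesis using c True by (rule_tac x=c in exI) auto
  next
    case False
    then obtain k0 where k0: "k0 \<in> U" "A e k0 \<noteq> 0" by blast
    define U' where "U' = U - {k0}"
    define A' where "A' = (\<lambda>e' k. A e' k - A e' k0 * A e k / A e k0)"
    have fU': "finite U'" using insert.prems U'_def by simp
    have "card U' = card U - 1" using k0 insert.prems U'_def by simp
    hence "card E < card U'" using insert by simp
    from insert.IH[OF fU' this, of A'] obtain c' where
      c': "\<exists>k\<in>U'. c' k \<noteq> 0" "\<forall>e\<in>E. (\<Sum>k\<in>U'. A' e k * c' k) = 0" by blast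
    define c where "c = (\<lambda>k. if k = k0 then - (\<Sum>k\<in>U'. A e k * c' k) / A e k0 else c' k)"
    have split: "(\<Sum>k\<in>U. g k) = g k0 + (\<Sum>k\<in>U'. g k)" for g :: "'k \<Rightarrow> real"
      using k0 insert.prems U'_def by (simp add: sum.remove)
    have cU': "(\<Sum>k\<in>U'. g k * c k) = (\<Sum>k\<in>U'. g k * c' k)" for g :: "'k \<Rightarrow> real"
      by (rule sum.cong) (auto simp: c_def U'_def)
    have eq_e: "(\<Sum>k\<in>U. A e k * c k) = 0"
      unfolding split cU' using k0 by (simp add: c_def)
    have eq_E: "(\<Sum>k\<in>U. A e' k * c k) = 0" if "e' \<in> E" for e'
    proof -
      have "(\<Sum>k\<in>U. A e' k * c k) = A e' k0 * c k0 + (\<Sum>k\<in>U'. A e' k * c' k)"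
        unfolding split cU' ..
      also have "\<dots> = (\<Sum>k\<in>U'. A' e' k * c' k)"
        using k0 by (simp add: c_def A'_def algebra_simps sum_subtractf sum_distrib_left sum_divide_distrib)
      finally show ?thesis using c'(2) that by simp
    qed
    have "\<exists>k\<in>U. c k \<noteq> 0" using c'(1) by (auto simp: c_def U'_def)
    then show ?thesis using eq_e eq_E by (rule_tac x=c in exI) auto
  qed
qed




definition parts :: "'a set \<Rightarrow> nat \<Rightarrow> ('a \<Rightarrow> nat) \<Rightarrow> 'a set set" where
  "parts S r f = (\<lambda>j. {p\<in>S. f p = j}) ` {..<r}"

definition tvw :: "('a::real_vector) set \<Rightarrow> nat \<Rightarrow> ('a \<Rightarrow> nat) \<Rightarrow> 'a set \<Rightarrow> 'a \<Rightarrow> bool" where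
  "tvw S r f C x \<longleftrightarrow> C \<subseteq> S \<and> (\<forall>p\<in>S. f p < r) \<and> (\<forall>j<r. x \<in> convex hull {p\<in>C. f p = j})"

lemma tvw_block_ne:
  assumes "tvw S r f C x" "j < r"
  shows "{p\<in>S. f p = j} \<noteq> {}"
proof -
  have "x \<in> convex hull {p\<in>C. f p = j}" using assms unfolding tvw_def by blast
  hence "{p\<in>C. f p = j} \<noteq> {}" by (metis convex_hull_empty empty_iff)
  thus ?thesis using assms(1) unfolding tvw_def by blast
qed

lemma tvw_partition:
  assumes "finite S" "tvw S r f C x"
  shows "tverberg_partition S r (parts S r f)"
proof -
  have ne: "{p\<in>S. f p = j} \<noteq> {}" if "j < r" for j using tvw_block_ne[OF assms(2) that] .
  have inj: "inj_on (\<lambda>j. {p\<in>S. f p = j}) {..<r}"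
  proof (rule inj_onI)
    fix i j assume "i \<in> {..<r}" "j \<in> {..<r}" "{p\<in>S. f p = i} = {p\<in>S. f p = j}"
    with ne[of i] show "i = j" by auto
  qed
  have "is_partition S r (parts S r f)"
    unfolding is_partition_def parts_def
    using ne inj assms(2) by (auto simp: card_image tvw_def)
  moreover have "x \<in> (\<Inter>B\<in>parts S r f. convex hull B)"
  proof -
    have "x \<in> convex hull {p\<in>S. f p = j}" if "j < r" for j
    proof -
      have "x \<in> convex hull {p\<in>C. f p = j}" using assms(2) that unfolding tvw_def by blast
      moreover have "{p\<in>C. f p = j} \<subseteq> {p\<in>S. f p = j}" using assms(2) unfolding tvw_def by blast
      ultimately show ?thesis using hull_mono by blast
    qed
    thus ?thesis unfolding parts_def by auto
  qed
  ultimately show ?thesis unfolding tverberg_partition_def by blast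
qed

lemma partition_labeling:
  assumes "finite S" "tverberg_partition S r P"
  shows "\<exists>f x. tvw S r f S x \<and> parts S r f = P"
proof -
  have part: "is_partition S r P" and int: "(\<Inter>B\<in>P. convex hull B) \<noteq> {}"
    using assms(2) unfolding tverberg_partition_def by auto
  have fP: "finite P" and cP: "card P = r" using part unfolding is_partition_def by auto
  obtain g where g: "bij_betw g {0..<r} P" using ex_bij_betw_nat_finite[OF fP] cP by blast
  have disj: "\<And>B C. B \<in> P \<Longrightarrow> C \<in> P \<Longrightarrow> B \<noteq> C \<Longrightarrow> B \<inter> C = {}"
    and un: "\<Union>P = S" and nem: "\<And>B. B \<in> P \<Longrightarrow> B \<noteq> {}"
    using part unfolding is_partition_def by auto
  define f where "f p = (SOME j. j < r \<and> p \<in> g j)" for p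
  have ex: "\<exists>j. j < r \<and> p \<in> g j" if pS: "p \<in> S" for p
  proof -
    obtain B where "B \<in> P" "p \<in> B" using un pS by blast
    then obtain j where "j \<in> {0..<r}" "g j = B" using g unfolding bij_betw_def by auto
    thus ?thesis using \<open>p \<in> B\<close> by auto
  qed
  have uniq: "i = j" if "i < r" "j < r" "p \<in> g i" "p \<in> g j" for i j p
  proof (rule ccontr)
    assume "i \<noteq> j"
    hence "g i \<noteq> g j" using g that unfolding bij_betw_def inj_on_def by auto
    moreover have "g i \<in> P" "g j \<in> P" using g that unfolding bij_betw_def by auto
    ultimately show False using disj that by blast
  qed
  have fp: "f p < r \<and> p \<in> g (f p)" if "p \<in> S" for p
    unfolding f_def by (rule someI_ex) (rule ex[OF that])
  have blk: "{p\<in>S. f p = j} = g j" if "j < r" for j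
  proof
    show "{p\<in>S. f p = j} \<subseteq> g j" using fp by auto
    show "g j \<subseteq> {p\<in>S. f p = j}"
    proof
      fix p assume p: "p \<in> g j"
      have "g j \<in> P" using g that unfolding bij_betw_def by auto
      hence "p \<in> S" using un p by blast
      thus "p \<in> {p\<in>S. f p = j}" using fp[of p] uniq[of "f p" j p] p that by auto
    qed
  qed
  have Pim: "P = g ` {..<r}" using g unfolding bij_betw_def by (auto simp: lessThan_atLeast0)
  obtain x where x: "x \<in> (\<Inter>B\<in>P. convex hull B)" using int by blast
  have "tvw S r f S x"
    unfolding tvw_def using fp blk x Pim by auto
  moreover have "parts S r f = P" unfolding parts_def Pim using blk by auto
  ultimately show ?thesis by blast
qed

lemma restrict_parts:
  "restrict_partition (parts S r f) T = (\<lambda>i. {q\<in>S. f q = i} \<inter> T) ` {..<r} - {{}}"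
  unfolding restrict_partition_def parts_def by (simp add: image_image)

lemma restrict_parts_S:
  assumes "tvw S r f C x"
  shows "restrict_partition (parts S r f) S = parts S r f"
  unfolding restrict_partition_def parts_def using tvw_block_ne[OF assms] by auto

lemma edge_move:
  assumes "finite S" "tvw S r f C x" "tvw S r g C' x'" "p \<in> S" "g = f(p := j)" "f p \<noteq> j"
  shows "(parts S r f, parts S r g) \<in> tverberg_graph_edges S r"
proof -
  have res: "restrict_partition (parts S r f) (S - {p}) = restrict_partition (parts S r g) (S - {p})"
    unfolding restrict_parts
  proof -
    have eqfun: "\<And>i. {q\<in>S. f q = i} \<inter> (S - {p}) = {q\<in>S. g q = i} \<inter> (S - {p})"
      using assms(5) by auto
    show "(\<lambda>i. {q\<in>S. f q = i} \<inter> (S - {p})) ` {..<r} - {{}} =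
      (\<lambda>i. {q\<in>S. g q = i} \<inter> (S - {p})) ` {..<r} - {{}}"
      by (simp only: eqfun)
  qed
  have neq: "parts S r f \<noteq> parts S r g"
  proof
    assume eq: "parts S r f = parts S r g"
    have fpr: "f p < r" using assms(2,4) unfolding tvw_def by blast
    have jr: "j < r" using assms(3,4,5) unfolding tvw_def by force
    have "{q\<in>S. f q = f p} \<in> parts S r g" using eq fpr unfolding parts_def by auto
    then obtain i where i: "i < r" "{q\<in>S. f q = f p} = {q\<in>S. g q = i}" unfolding parts_def by auto
    have "g p = i" using i(2) assms(4) by blast
    hence ij: "i = j" using assms(5) by simp
    obtain q where q: "q \<in> S" "f q = j" using tvw_block_ne[OF assms(2) jr] by blast
    have "q \<noteq> p" using q assms(6) by auto
    hence "g q = j" using q assms(5) by simp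
    hence "f q = f p" using i(2) ij q(1) by blast
    thus False using q assms(6) by simp
  qed
  have d: "partition_distance S (parts S r f) (parts S r g) = 1"
    unfolding partition_distance_def
  proof (rule Least_equality)
    show "\<exists>X\<subseteq>S. card X = 1 \<and> restrict_partition (parts S r f) (S - X) = restrict_partition (parts S r g) (S - X)"
    proof (intro exI conjI)
      show "{p} \<subseteq> S" using assms(4) by simp
      show "card {p} = 1" by simp
      show "restrict_partition (parts S r f) (S - {p}) = restrict_partition (parts S r g) (S - {p})" by (rule res)
    qed
  next
    fix k assume "\<exists>X\<subseteq>S. card X = k \<and> restrict_partition (parts S r f) (S - X) = restrict_partition (parts S r g) (S - X)"
    then obtain X where X: "X \<subseteq> S" "card X = k" "restrict_partition (parts S r f) (S - X) = restrict_partition (parts S r g) (S - X)" by blast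
    show "1 \<le> k"
    proof (rule ccontr)
      assume "\<not> 1 \<le> k"
      hence "card X = 0" using X(2) by simp
      moreover have "finite X" using X(1) assms(1) by (rule finite_subset)
      ultimately have "X = {}" by simp
      hence "parts S r f = parts S r g" using X(3) restrict_parts_S[OF assms(2)] restrict_parts_S[OF assms(3)] by simp
      thus False using neq by simp
    qed
  qed
  show ?thesis unfolding tverberg_graph_edges_def
    using tvw_partition[OF assms(1,2)] tvw_partition[OF assms(1,3)] d by blast
qed

lemma move_path:
  assumes "finite S" "tvw S r f C x" "\<forall>p\<in>S. g p < r" "\<forall>p\<in>C. g p = f p"
  shows "(parts S r f, parts S r g) \<in> (tverberg_graph_edges S r)\<^sup>*"
  using assms
proof (induction "card {p\<in>S. f p \<noteq> g p}" arbitrary: f rule: less_induct)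
  case less
  show ?case
  proof (cases "{p\<in>S. f p \<noteq> g p} = {}")
    case True
    hence "parts S r f = parts S r g" unfolding parts_def by (auto intro!: image_cong)
    thus ?thesis by simp
  next
    case False
    then obtain p where p: "p \<in> S" "f p \<noteq> g p" by blast
    define f1 where "f1 = f(p := g p)"
    have pC: "p \<notin> C" using p less.prems(4) by auto
    have eqC: "{q\<in>C. f1 q = j} = {q\<in>C. f q = j}" for j using pC unfolding f1_def by auto
    have t1: "tvw S r f1 C x"
    proof -
      have "\<forall>q\<in>S. f1 q < r" using less.prems(2,3) unfolding tvw_def f1_def by auto
      moreover have "C \<subseteq> S" "\<forall>j<r. x \<in> convex hull {q\<in>C. f q = j}"
        using less.prems(2) unfolding tvw_def by auto
      ultimately show ?thesis unfolding tvw_def eqC by blast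
    qed
    have edge: "(parts S r f, parts S r f1) \<in> tverberg_graph_edges S r"
      by (rule edge_move[OF less.prems(1,2) t1 p(1) f1_def p(2)])
    have sub: "{q\<in>S. f1 q \<noteq> g q} \<subset> {q\<in>S. f q \<noteq> g q}" using p unfolding f1_def by auto
    have "card {q\<in>S. f1 q \<noteq> g q} < card {q\<in>S. f q \<noteq> g q}"
      by (rule psubset_card_mono[OF _ sub]) (use less.prems(1) in auto)
    moreover have "\<forall>q\<in>C. g q = f1 q" using less.prems(4) pC unfolding f1_def by auto
    ultimately have "(parts S r f1, parts S r g) \<in> (tverberg_graph_edges S r)\<^sup>*"
      by (intro less.hyps less.prems(1,3) t1)
    thus ?thesis by (rule converse_rtrancl_into_rtrancl[OF edge])
  qed
qed




lemma ratio_step: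
  fixes l c :: "'k \<Rightarrow> real"
  assumes "finite U" "\<forall>p\<in>U. l p > 0" "\<exists>p\<in>U. c p < 0"
  shows "\<exists>t\<ge>0. (\<forall>p\<in>U. l p + t * c p \<ge> 0) \<and> (\<exists>p0\<in>U. l p0 + t * c p0 = 0)"
proof -
  define N where "N = {p\<in>U. c p < 0}"
  have fN: "finite N" and neN: "N \<noteq> {}" using assms unfolding N_def by auto
  define t where "t = Min ((\<lambda>p. l p / - c p) ` N)"
  have "t \<in> (\<lambda>p. l p / - c p) ` N" unfolding t_def using fN neN by (intro Min_in) auto
  then obtain p0 where p0: "p0 \<in> N" "t = l p0 / - c p0" by blast
  have t0: "t \<ge> 0" using p0 assms(2) unfolding N_def by (auto simp: divide_nonneg_neg less_imp_le)
  have le: "t \<le> l p / - c p" if "p \<in> N" for p unfolding t_def using fN that by (intro Min_le) auto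
  have "\<forall>p\<in>U. l p + t * c p \<ge> 0"
  proof
    fix p assume pU: "p \<in> U"
    show "l p + t * c p \<ge> 0"
    proof (cases "c p < 0")
      case True
      hence "t \<le> l p / - c p" using le pU unfolding N_def by auto
      moreover have "0 < - c p" using True by simp
      ultimately have "t * (- c p) \<le> l p" by (simp only: pos_le_divide_eq)
      thus ?thesis by simp
    next
      case False
      hence "t * c p \<ge> 0" using t0 by simp
      moreover have "l p > 0" using assms(2) pU by blast
      ultimately show ?thesis by linarith
    qed
  qed
  moreover have "l p0 + t * c p0 = 0" using p0 unfolding N_def by auto
  ultimately show ?thesis using t0 p0(1) unfolding N_def by blast
qed

lemma exists_neg:
  fixes c :: "'k \<Rightarrow> real"
  assumes "finite U" "\<exists>p\<in>U. c p \<noteq> 0" "(\<Sum>p\<in>U. c p) = 0"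
  shows "\<exists>p\<in>U. c p < 0"
proof (rule ccontr)
  assume "\<not> ?thesis"
  hence "\<forall>p\<in>U. c p \<ge> 0" by auto
  hence "\<forall>p\<in>U. c p = 0" using sum_nonneg_eq_0_iff[OF assms(1)] assms(3) by blast
  thus False using assms(2) by auto
qed

lemma card_E:
  fixes r :: nat
  assumes "r \<ge> 1"
  shows "card (({..<r} \<times> {0::'a::euclidean_space}) \<union> ({1..<r} \<times> Basis)) = Tv DIM('a) r"
proof -
  have "card (({..<r} \<times> {0::'a}) \<union> ({1..<r} \<times> Basis)) = card ({..<r} \<times> {0::'a}) + card ({1..<r} \<times> (Basis::'a set))"
    by (rule card_Un_disjoint) auto
  also have "\<dots> = r + (r - 1) * DIM('a)" by (simp add: card_cartesian_product)
  also have "\<dots> = Tv DIM('a) r" unfolding Tv_def using assms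
    by (cases r) (auto simp: algebra_simps)
  finally show ?thesis .
qed

lemma core_step:
  fixes S :: "'a::euclidean_space set" and f :: "'a \<Rightarrow> nat"
  assumes fin: "finite S" and r1: "r \<ge> 1" and fr: "\<forall>p\<in>S. f p < r"
  shows "(\<forall>p\<in>S. l p \<ge> 0) \<Longrightarrow>
    (\<forall>j<r. (\<Sum>p\<in>{q\<in>S. f q = j}. l p) = 1 \<and> (\<Sum>p\<in>{q\<in>S. f q = j}. l p *\<^sub>R p) = x) \<Longrightarrow>
    \<exists>C y. tvw S r f C y \<and> card C \<le> Tv DIM('a) r"
proof (induction "card {p\<in>S. l p \<noteq> 0}" arbitrary: l x rule: less_induct)
  case less
  define Sp where "Sp = {p\<in>S. l p \<noteq> 0}"
  have SpS: "Sp \<subseteq> S" and fSp: "finite Sp" using fin unfolding Sp_def by auto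
  show ?case
  proof (cases "card Sp \<le> Tv DIM('a) r")
    case True
    have "x \<in> convex hull {p\<in>Sp. f p = j}" if j: "j < r" for j
    proof -
      have sub: "{p\<in>Sp. f p = j} \<subseteq> {p\<in>S. f p = j}" using SpS by auto
      have z: "\<forall>p\<in>{p\<in>S. f p = j} - {p\<in>Sp. f p = j}. l p = 0" unfolding Sp_def by auto
      have "(\<Sum>p\<in>{p\<in>Sp. f p = j}. l p) = 1"
        using less.prems(2) j sum.mono_neutral_right[OF _ sub z] fin by auto
      moreover have "(\<Sum>p\<in>{p\<in>Sp. f p = j}. l p *\<^sub>R p) = x"
        using less.prems(2) j sum.mono_neutral_right[OF _ sub, of "\<lambda>p. l p *\<^sub>R p"] z fin by auto
      moreover have "\<forall>p\<in>{p\<in>Sp. f p = j}. 0 \<le> l p" using less.prems(1) SpS by auto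
      ultimately show ?thesis using fSp by (subst convex_hull_finite) auto
    qed
    hence "tvw S r f Sp x" unfolding tvw_def using SpS fr by auto
    thus ?thesis using True by blast
  next
    case False
    define E :: "(nat \<times> 'a) set" where "E = ({..<r} \<times> {0}) \<union> ({1..<r} \<times> Basis)"
    have cE: "card E = Tv DIM('a) r" unfolding E_def by (rule card_E[OF r1])
    have fE: "finite E" unfolding E_def by auto
    define A :: "nat \<times> 'a \<Rightarrow> 'a \<Rightarrow> real" where
      "A e p = (case e of (j, b) \<Rightarrow> if b = 0 then (if f p = j then 1 else 0)
          else (if f p = j then inner p b else 0) - (if f p = 0 then inner p b else 0))" for e p
    obtain c where c: "\<exists>k\<in>Sp. c k \<noteq> 0" "\<forall>e\<in>E. (\<Sum>k\<in>Sp. A e k * c k) = 0"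
      using homog_system_nontrivial[OF fE fSp, of A] cE False by auto
    define c' where "c' p = (if p \<in> Sp then c p else 0)" for p
    have toS: "(\<Sum>k\<in>Sp. g k * c k) = (\<Sum>k\<in>S. g k * c' k)" for g :: "'a \<Rightarrow> real"
    proof -
      have "(\<Sum>k\<in>S. g k * c' k) = (\<Sum>k\<in>Sp. g k * c' k)"
        by (rule sum.mono_neutral_right[OF fin SpS]) (auto simp: c'_def)
      also have "\<dots> = (\<Sum>k\<in>Sp. g k * c k)" by (rule sum.cong) (auto simp: c'_def)
      finally show ?thesis by simp
    qed
    define cs where "cs j = (\<Sum>p\<in>{q\<in>S. f q = j}. c' p)" for j
    define cw where "cw j = (\<Sum>p\<in>{q\<in>S. f q = j}. c' p *\<^sub>R p)" for j
    have cs0: "cs j = 0" if "j < r" for j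
    proof -
      have "(j, 0) \<in> E" using that unfolding E_def by auto
      hence "(\<Sum>k\<in>Sp. A (j, 0) k * c k) = 0" using c(2) by blast
      hence "(\<Sum>k\<in>S. (if f k = j then 1 else 0) * c' k) = 0" unfolding toS A_def by simp
      moreover have "(\<Sum>k\<in>S. (if f k = j then 1 else 0) * c' k) = (\<Sum>q\<in>S. if f q = j then c' q else 0)"
        by (rule sum.cong) auto
      ultimately show ?thesis unfolding cs_def by (simp add: sum.inter_filter[OF fin])
    qed
    have inner_cw: "inner (cw j) b = (\<Sum>k\<in>S. (if f k = j then inner k b else 0) * c' k)" for j b
      unfolding cw_def by (simp add: inner_sum_left sum.inter_filter[OF fin]) (rule sum.cong, auto)
    have cweq: "cw j = cw 0" if "j < r" for j
    proof (cases "j = 0")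
      case False
      show ?thesis
      proof (rule euclidean_eqI)
        fix b :: 'a assume b: "b \<in> Basis"
        hence "(j, b) \<in> E" using that False unfolding E_def by auto
        hence "(\<Sum>k\<in>Sp. A (j, b) k * c k) = 0" using c(2) by blast
        moreover have "b \<noteq> 0" using b by auto
        ultimately have "(\<Sum>k\<in>S. ((if f k = j then inner k b else 0) - (if f k = 0 then inner k b else 0)) * c' k) = 0"
          unfolding toS A_def by simp
        thus "inner (cw j) b = inner (cw 0) b" unfolding inner_cw
          by (simp add: left_diff_distrib sum_subtractf)
      qed
    qed simp
    have tot: "(\<Sum>k\<in>Sp. c k) = 0"
    proof -
      have "(\<Sum>k\<in>Sp. c k) = (\<Sum>k\<in>S. c' k)" using toS[of "\<lambda>_. 1"] by simp
      also have "\<dots> = (\<Sum>j<r. cs j)" unfolding cs_def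
      proof -
        have "f ` S \<subseteq> {..<r}" using fr by auto
        from sum.group[OF fin _ this, of c'] show "sum c' S = (\<Sum>j<r. sum c' {q \<in> S. f q = j})" by simp
      qed
      also have "\<dots> = 0" using cs0 by simp
      finally show ?thesis .
    qed
    obtain p1 where "p1 \<in> Sp" "c p1 < 0" using exists_neg[OF fSp c(1) tot] by blast
    have lpos: "\<forall>p\<in>Sp. l p > 0" using less.prems(1) unfolding Sp_def by force
    obtain t p0 where t: "t \<ge> 0" "\<forall>p\<in>Sp. l p + t * c p \<ge> 0" "p0 \<in> Sp" "l p0 + t * c p0 = 0"
      using ratio_step[OF fSp lpos] \<open>p1 \<in> Sp\<close> \<open>c p1 < 0\<close> by blast
    define l' where "l' p = l p + t * c' p" for p
    have l'nn: "\<forall>p\<in>S. l' p \<ge> 0"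
    proof
      fix p assume "p \<in> S"
      thus "l' p \<ge> 0" using t(2) less.prems(1) unfolding l'_def c'_def by (cases "p \<in> Sp") auto
    qed
    have l'sums: "\<forall>j<r. (\<Sum>p\<in>{q\<in>S. f q = j}. l' p) = 1 \<and> (\<Sum>p\<in>{q\<in>S. f q = j}. l' p *\<^sub>R p) = x + t *\<^sub>R cw 0"
    proof (intro allI impI conjI)
      fix j assume j: "j < r"
      show "(\<Sum>p\<in>{q\<in>S. f q = j}. l' p) = 1"
        using less.prems(2) j cs0[OF j] unfolding l'_def cs_def by (simp add: sum.distrib sum_distrib_left[symmetric])
      have "(\<Sum>p\<in>{q\<in>S. f q = j}. l' p *\<^sub>R p) = (\<Sum>p\<in>{q\<in>S. f q = j}. l p *\<^sub>R p) + t *\<^sub>R cw j"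
        unfolding l'_def cw_def by (simp add: scaleR_add_left sum.distrib scaleR_sum_right)
      thus "(\<Sum>p\<in>{q\<in>S. f q = j}. l' p *\<^sub>R p) = x + t *\<^sub>R cw 0"
        using less.prems(2) j cweq[OF j] by simp
    qed
    have "{p\<in>S. l' p \<noteq> 0} \<subseteq> Sp - {p0}"
      using t(3,4) unfolding l'_def c'_def Sp_def by auto
    hence "card {p\<in>S. l' p \<noteq> 0} \<le> card (Sp - {p0})" using fSp by (intro card_mono) auto
    also have "\<dots> < card Sp" using fSp t(3) by (rule card_Diff1_less)
    finally have "card {p\<in>S. l' p \<noteq> 0} < card {p\<in>S. l p \<noteq> 0}" unfolding Sp_def .
    thus ?thesis using less.hyps l'nn l'sums by blast
  qed
qed

lemma core_lemma:
  fixes S :: "'a::euclidean_space set"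
  assumes "finite S" "r \<ge> 1" "tvw S r f S x"
  shows "\<exists>C y. tvw S r f C y \<and> card C \<le> Tv DIM('a) r"
proof -
  have fr: "\<forall>p\<in>S. f p < r" using assms(3) unfolding tvw_def by auto
  have "\<forall>j. \<exists>u. j < r \<longrightarrow> (\<forall>p\<in>{q\<in>S. f q = j}. 0 \<le> u p) \<and> sum u {q\<in>S. f q = j} = 1 \<and>
     (\<Sum>p\<in>{q\<in>S. f q = j}. u p *\<^sub>R p) = x"
  proof
    fix j
    show "\<exists>u. j < r \<longrightarrow> (\<forall>p\<in>{q\<in>S. f q = j}. 0 \<le> u p) \<and> sum u {q\<in>S. f q = j} = 1 \<and>
     (\<Sum>p\<in>{q\<in>S. f q = j}. u p *\<^sub>R p) = x"
    proof (cases "j < r")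
      case True
      hence "x \<in> convex hull {q\<in>S. f q = j}" using assms(3) unfolding tvw_def by auto
      thus ?thesis using assms(1) by (subst (asm) convex_hull_finite) auto
    qed auto
  qed
  from choice[OF this] obtain U where U0: "\<forall>j. j < r \<longrightarrow> (\<forall>p\<in>{q\<in>S. f q = j}. 0 \<le> U j p) \<and> sum (U j) {q\<in>S. f q = j} = 1 \<and>
     (\<Sum>p\<in>{q\<in>S. f q = j}. U j p *\<^sub>R p) = x" by (elim exE)
  have U: "(\<forall>p\<in>{q\<in>S. f q = j}. 0 \<le> U j p) \<and> sum (U j) {q\<in>S. f q = j} = 1 \<and>
     (\<Sum>p\<in>{q\<in>S. f q = j}. U j p *\<^sub>R p) = x" if "j < r" for j
    using U0 that by blast
  define l where "l p = U (f p) p" for p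
  have "\<forall>p\<in>S. l p \<ge> 0" using U fr unfolding l_def by auto
  moreover have "\<forall>j<r. (\<Sum>p\<in>{q\<in>S. f q = j}. l p) = 1 \<and> (\<Sum>p\<in>{q\<in>S. f q = j}. l p *\<^sub>R p) = x"
  proof (intro allI impI)
    fix j assume j: "j < r"
    have "(\<Sum>p\<in>{q\<in>S. f q = j}. l p) = sum (U j) {q\<in>S. f q = j}"
      unfolding l_def by (rule sum.cong) auto
    moreover have "(\<Sum>p\<in>{q\<in>S. f q = j}. l p *\<^sub>R p) = (\<Sum>p\<in>{q\<in>S. f q = j}. U j p *\<^sub>R p)"
      unfolding l_def by (rule sum.cong) auto
    ultimately show "(\<Sum>p\<in>{q\<in>S. f q = j}. l p) = 1 \<and> (\<Sum>p\<in>{q\<in>S. f q = j}. l p *\<^sub>R p) = x"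
      using U[OF j] by simp
  qed
  ultimately show ?thesis using core_step[OF assms(1,2) fr] by blast
qed




definition Xv :: "nat \<Rightarrow> 'a::euclidean_space \<Rightarrow> nat \<Rightarrow> nat \<Rightarrow> 'a \<times> real" where
  "Xv r k j i = ((if i = j then 1 else 0) - 1 / real r) *\<^sub>R (k, 1)"

definition Tz :: "nat \<Rightarrow> 'a::euclidean_space set \<Rightarrow> ('a \<Rightarrow> nat) \<Rightarrow> ('a \<Rightarrow> real) \<Rightarrow> nat \<Rightarrow> 'a \<times> real" where
  "Tz r K h l i = (\<Sum>k\<in>K. l k *\<^sub>R Xv r k (h k) i)"

definition ip :: "nat \<Rightarrow> (nat \<Rightarrow> 'b::real_inner) \<Rightarrow> (nat \<Rightarrow> 'b) \<Rightarrow> real" where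
  "ip r A B = (\<Sum>i<r. inner (A i) (B i))"

definition Fv :: "nat \<Rightarrow> 'a::euclidean_space set \<Rightarrow> ('a \<Rightarrow> nat) \<Rightarrow> ('a \<Rightarrow> real) \<Rightarrow> real" where
  "Fv r K h l = ip r (Tz r K h l) (Tz r K h l)"

definition valid :: "nat \<Rightarrow> 'a set \<Rightarrow> ('a \<Rightarrow> nat) \<Rightarrow> ('a \<Rightarrow> real) \<Rightarrow> bool" where
  "valid r K h l \<longleftrightarrow> (\<forall>k\<in>K. h k < r) \<and> (\<forall>k\<in>K. l k \<ge> 0) \<and> sum l K = 1"

lemma ip_nonneg: "ip r A A \<ge> 0"
  unfolding ip_def by (intro sum_nonneg) auto

lemma ip_cong: "(\<And>i. i < r \<Longrightarrow> A i = A' i) \<Longrightarrow> (\<And>i. i < r \<Longrightarrow> B i = B' i) \<Longrightarrow> ip r A B = ip r A' B'"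
  unfolding ip_def by (rule sum.cong) auto

lemma ip_sym: "ip r A B = ip r B A"
  unfolding ip_def by (simp add: inner_commute)

lemma ip_expand:
  "ip r (\<lambda>i. a *\<^sub>R Z i + b *\<^sub>R X i) (\<lambda>i. a *\<^sub>R Z i + b *\<^sub>R X i)
   = a\<^sup>2 * ip r Z Z + 2 * a * b * ip r X Z + b\<^sup>2 * ip r X X"
proof -
  have "inner (a *\<^sub>R Z i + b *\<^sub>R X i) (a *\<^sub>R Z i + b *\<^sub>R X i)
      = a\<^sup>2 * inner (Z i) (Z i) + 2 * a * b * inner (X i) (Z i) + b\<^sup>2 * inner (X i) (X i)" for i
    by (simp add: inner_add_left inner_add_right inner_commute[of "Z i" "X i"] algebra_simps power2_eq_square)
  thus ?thesis unfolding ip_def by (simp add: sum.distrib sum_distrib_left)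
qed

lemma ip_sum_left:
  "finite K \<Longrightarrow> ip r (\<lambda>i. \<Sum>k\<in>K. c k *\<^sub>R Y k i) B = (\<Sum>k\<in>K. c k * ip r (Y k) B)"
  unfolding ip_def by (simp add: inner_sum_left sum_distrib_left sum.swap[of _ K])

lemma Tz_cong: "(\<And>k. k \<in> K \<Longrightarrow> h k = h' k) \<Longrightarrow> (\<And>k. k \<in> K \<Longrightarrow> l k = l' k) \<Longrightarrow> Tz r K h l = Tz r K h' l'"
  unfolding Tz_def by (intro ext sum.cong) auto

lemma Fv_cong: "(\<And>k. k \<in> K \<Longrightarrow> h k = h' k) \<Longrightarrow> (\<And>k. k \<in> K \<Longrightarrow> l k = l' k) \<Longrightarrow> Fv r K h l = Fv r K h' l'"
  unfolding Fv_def using Tz_cong by metis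

lemma Tz_lin:
  "Tz r K h (\<lambda>k. a * l k + b * m k) i = a *\<^sub>R Tz r K h l i + b *\<^sub>R Tz r K h m i"
  unfolding Tz_def by (simp add: scaleR_add_left sum.distrib scaleR_sum_right)

lemma Tz_delta:
  assumes "finite K" "k0 \<in> K"
  shows "Tz r K h (\<lambda>k. if k = k0 then 1 else 0) i = Xv r k0 (h k0) i"
proof -
  have "Tz r K h (\<lambda>k. if k = k0 then 1 else 0) i = (\<Sum>k\<in>K. if k = k0 then Xv r k (h k) i else 0)"
    unfolding Tz_def by (rule sum.cong) auto
  thus ?thesis using assms by simp
qed

lemma Xv_sum_j:
  assumes "i < r"
  shows "(\<Sum>j<r. Xv r k j i) = 0"
proof -
  have "(\<Sum>j<r. Xv r k j i) = (\<Sum>j<r. ((if i = j then 1 else 0) - 1 / real r)) *\<^sub>R (k, 1)"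
    unfolding Xv_def by (simp only: scaleR_sum_left)
  also have "(\<Sum>j<r. ((if i = j then 1 else 0) - 1 / real r)) = 0"
    using assms by (simp add: sum_subtractf)
  finally show ?thesis by (simp add: zero_prod_def)
qed

lemma Xv_sum_i:
  assumes "j < r"
  shows "(\<Sum>i<r. Xv r k j i) = 0"
proof -
  have "(\<Sum>i<r. Xv r k j i) = (\<Sum>i<r. ((if i = j then 1 else 0) - 1 / real r)) *\<^sub>R (k, 1)"
    unfolding Xv_def by (simp only: scaleR_sum_left)
  also have "(\<Sum>i<r. ((if i = j then 1 else 0) - 1 / real r)) = 0"
    using assms by (simp add: sum_subtractf)
  finally show ?thesis by (simp add: zero_prod_def)
qed

lemma quad_real:
  fixes a b :: real
  assumes "a > 0" "b \<ge> 0"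
  shows "0 < a / (a + b) \<and> a / (a + b) \<le> 1 \<and> - 2 * (a / (a + b)) * a + (a / (a + b))\<^sup>2 * b < 0"
proof -
  define t where "t = a / (a + b)"
  have t0: "t > 0" and t1: "t \<le> 1" using assms unfolding t_def by auto
  have "t * b \<le> a"
  proof -
    have "t * b = a * b / (a + b)" unfolding t_def by simp
    also have "\<dots> \<le> a" using assms by (simp add: divide_le_eq algebra_simps)
    finally show ?thesis .
  qed
  hence "- 2 * t * a + t\<^sup>2 * b = t * (t * b - 2 * a)" by (simp add: algebra_simps power2_eq_square)
  also have "\<dots> < 0" using t0 \<open>t * b \<le> a\<close> assms(1) by (intro mult_pos_neg) auto
  finally show ?thesis using t0 t1 unfolding t_def by simp
qed

lemma Fv_poly:
  assumes "finite K"
  shows "Fv r K h l = (\<Sum>i<r. \<Sum>k\<in>K. \<Sum>k'\<in>K. l k * l k' * inner (Xv r k' (h k') i) (Xv r k (h k) i))"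
  unfolding Fv_def ip_def Tz_def
  by (simp add: inner_sum_left inner_sum_right sum_distrib_left mult.assoc)

lemma Fv_cont:
  assumes "finite K"
  shows "continuous_map (product_topology (\<lambda>_. euclideanreal) K) euclideanreal (\<lambda>l. Fv r K h l)"
  unfolding Fv_poly[OF assms]
  by (intro continuous_map_sum continuous_map_real_mult continuous_map_product_projection
      continuous_map_const[THEN iffD2] assms finite_lessThan) auto

lemma min_exists:
  fixes K :: "'a::euclidean_space set"
  assumes "finite K" "K \<noteq> {}" "r \<ge> 1"
  shows "\<exists>h l. valid r K h l \<and> (\<forall>h' l'. valid r K h' l' \<longrightarrow> Fv r K h l \<le> Fv r K h' l')"
proof -
  define X where "X = product_topology (\<lambda>_::'a. euclideanreal) K"
  define D where "D = {l \<in> PiE K (\<lambda>_. {0..1::real}). sum l K \<in> {1}}"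
  have cpi: "compactin X (PiE K (\<lambda>_. {0..1::real}))" unfolding X_def by (simp add: compactin_PiE)
  have clpi: "closedin X (PiE K (\<lambda>_. {0..1::real}))" unfolding X_def
    by (simp add: closedin_product_topology)
  have csum: "continuous_map X euclideanreal (\<lambda>l. sum l K)" unfolding X_def
    by (intro continuous_map_sum continuous_map_product_projection assms(1))
  have clD: "closedin X D" unfolding D_def
    by (rule closedin_continuous_map_preimage_gen[OF csum clpi]) simp
  have cD: "compactin X D" by (rule closed_compactin[OF cpi _ clD]) (auto simp: D_def)
  obtain k1 where k1: "k1 \<in> K" using assms(2) by blast
  have neD: "restrict (\<lambda>k. if k = k1 then 1 else 0) K \<in> D"
    unfolding D_def using k1 assms(1) by (auto simp: restrict_def)
  have "\<forall>h. \<exists>l. l \<in> D \<and> (\<forall>l'\<in>D. Fv r K h l \<le> Fv r K h l')"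
  proof
    fix h
    have "compactin euclideanreal ((\<lambda>l. Fv r K h l) ` D)"
      by (rule image_compactin[OF cD]) (unfold X_def, rule Fv_cont[OF assms(1)])
    hence "compact ((\<lambda>l. Fv r K h l) ` D)" by simp
    moreover have "(\<lambda>l. Fv r K h l) ` D \<noteq> {}" using neD by blast
    ultimately obtain v where "v \<in> (\<lambda>l. Fv r K h l) ` D" "\<forall>w\<in>(\<lambda>l. Fv r K h l) ` D. v \<le> w"
      using compact_attains_inf by blast
    thus "\<exists>l. l \<in> D \<and> (\<forall>l'\<in>D. Fv r K h l \<le> Fv r K h l')" by blast
  qed
  from choice[OF this] obtain L where L: "\<forall>h. L h \<in> D \<and> (\<forall>l'\<in>D. Fv r K h (L h) \<le> Fv r K h l')"
    by (elim exE)
  define H where "H = PiE K (\<lambda>_. {..<r})"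
  have fH: "finite H" unfolding H_def using assms(1) by (simp add: finite_PiE)
  have neH: "restrict (\<lambda>_. 0) K \<in> H" unfolding H_def using assms(3) by auto
  define m where "m h = Fv r K h (L h)" for h
  have "Min (m ` H) \<in> m ` H" using fH neH by (intro Min_in) auto
  then obtain h0 where h0: "h0 \<in> H" "m h0 = Min (m ` H)" by auto
  have h0min: "m h0 \<le> m h" if "h \<in> H" for h using h0(2) fH that by simp
  have "valid r K h0 (L h0)"
    using h0(1) L unfolding valid_def H_def D_def PiE_iff by auto
  moreover have "Fv r K h0 (L h0) \<le> Fv r K h' l'" if v: "valid r K h' l'" for h' l'
  proof -
    have hr: "restrict h' K \<in> H" using v unfolding H_def valid_def by auto
    have "l' k \<le> 1" if "k \<in> K" for k
    proof -
      have "l' k \<le> sum l' K" using v that assms(1) unfolding valid_def by (intro member_le_sum) auto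
      thus ?thesis using v unfolding valid_def by simp
    qed
    hence lr: "restrict l' K \<in> D" using v unfolding D_def valid_def by auto
    have "Fv r K h' l' = Fv r K (restrict h' K) (restrict l' K)" by (rule Fv_cong) auto
    also have "\<dots> \<ge> m (restrict h' K)" unfolding m_def using L lr by blast
    finally have "m (restrict h' K) \<le> Fv r K h' l'" .
    moreover have "m h0 \<le> m (restrict h' K)" using h0min hr by blast
    ultimately show ?thesis unfolding m_def by simp
  qed
  ultimately show ?thesis by blast
qed

lemma opt:
  fixes K :: "'a::euclidean_space set"
  assumes fK: "finite K" and v: "valid r K h l"
    and mn: "\<forall>h' l'. valid r K h' l' \<longrightarrow> Fv r K h l \<le> Fv r K h' l'" and k0: "k0 \<in> K"
  shows "ip r (Xv r k0 (h k0)) (Tz r K h l) \<ge> Fv r K h l"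
proof (rule ccontr)
  define Z where "Z = Tz r K h l"
  define X where "X = Xv r k0 (h k0)"
  define zz where "zz = ip r Z Z"
  define xz where "xz = ip r X Z"
  define xx where "xx = ip r X X"
  assume "\<not> ?thesis"
  hence a0: "zz - xz > 0" unfolding zz_def xz_def Z_def X_def Fv_def by simp
  have "ip r (\<lambda>i. (-1) *\<^sub>R Z i + 1 *\<^sub>R X i) (\<lambda>i. (-1) *\<^sub>R Z i + 1 *\<^sub>R X i) = zz - 2 * xz + xx"
    unfolding ip_expand zz_def xz_def xx_def by simp
  moreover have "ip r (\<lambda>i. (-1) *\<^sub>R Z i + 1 *\<^sub>R X i) (\<lambda>i. (-1) *\<^sub>R Z i + 1 *\<^sub>R X i) \<ge> 0"
    by (rule ip_nonneg)
  ultimately have b0: "xx - 2 * xz + zz \<ge> 0" by linarith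
  define a where "a = zz - xz"
  define b where "b = xx - 2 * xz + zz"
  define t where "t = a / (a + b)"
  have q: "0 < t" "t \<le> 1" "- 2 * t * a + t\<^sup>2 * b < 0"
    using quad_real[of a b] a0 b0 unfolding a_def b_def t_def by auto
  define l' where "l' = (\<lambda>k. (1 - t) * l k + t * (if k = k0 then 1 else 0))"
  have "valid r K h l'"
  proof -
    have "\<forall>k\<in>K. l' k \<ge> 0" using v q unfolding valid_def l'_def by auto
    moreover have "sum l' K = 1" using v k0 fK unfolding valid_def l'_def
      by (simp add: sum.distrib sum_distrib_left[symmetric])
    ultimately show ?thesis using v unfolding valid_def by auto
  qed
  hence "Fv r K h l \<le> Fv r K h l'" using mn by blast
  moreover have "Fv r K h l' = (1 - t)\<^sup>2 * zz + 2 * (1 - t) * t * xz + t\<^sup>2 * xx"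
  proof -
    have tz: "Tz r K h l' = (\<lambda>i. (1 - t) *\<^sub>R Z i + t *\<^sub>R X i)"
      unfolding l'_def Tz_lin Tz_delta[OF fK k0] Z_def X_def by simp
    have "Fv r K h l' = ip r (\<lambda>i. (1 - t) *\<^sub>R Z i + t *\<^sub>R X i) (\<lambda>i. (1 - t) *\<^sub>R Z i + t *\<^sub>R X i)"
      unfolding Fv_def tz ..
    also have "\<dots> = (1 - t)\<^sup>2 * zz + 2 * (1 - t) * t * xz + t\<^sup>2 * xx"
      unfolding zz_def xz_def xx_def by (rule ip_expand)
    finally show ?thesis .
  qed
  moreover have "(1 - t)\<^sup>2 * zz + 2 * (1 - t) * t * xz + t\<^sup>2 * xx = zz + (- 2 * t * a + t\<^sup>2 * b)"
    unfolding a_def b_def by (simp add: algebra_simps power2_eq_square)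
  ultimately have "Fv r K h l < zz" using q(3) by linarith
  thus False unfolding zz_def Z_def Fv_def by simp
qed




lemma reduce:
  fixes K :: "'a::euclidean_space set"
  assumes fK: "finite K" and r1: "r \<ge> 1" and cK: "Tv DIM('a) r \<le> card K" and v: "valid r K h l"
    and mn: "\<forall>h' l'. valid r K h' l' \<longrightarrow> Fv r K h l \<le> Fv r K h' l'" and zpos: "Fv r K h l > 0"
  shows "\<exists>l'. valid r K h l' \<and> (\<forall>i<r. Tz r K h l' i = Tz r K h l i) \<and> (\<exists>k0\<in>K. l' k0 = 0)"
proof (cases "\<exists>k0\<in>K. l k0 = 0")
  case True
  thus ?thesis using v by blast
next
  case False
  have lpos: "\<forall>k\<in>K. l k > 0" using False v unfolding valid_def by force
  define Z where "Z = Tz r K h l"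
  define zz where "zz = Fv r K h l"
  have zzZ: "zz = ip r Z Z" unfolding zz_def Z_def Fv_def ..
  have ge: "ip r (Xv r k (h k)) Z \<ge> zz" if "k \<in> K" for k
    using opt[OF fK v mn that] unfolding Z_def zz_def .
  have Zeq: "Z = (\<lambda>i. \<Sum>k\<in>K. l k *\<^sub>R Xv r k (h k) i)" unfolding Z_def by (rule ext) (simp add: Tz_def)
  have "ip r Z Z = ip r (\<lambda>i. \<Sum>k\<in>K. l k *\<^sub>R Xv r k (h k) i) Z" by (subst (1) Zeq) (rule refl)
  also have "\<dots> = (\<Sum>k\<in>K. l k * ip r (Xv r k (h k)) Z)" by (rule ip_sum_left[OF fK])
  finally have ipZ: "ip r Z Z = (\<Sum>k\<in>K. l k * ip r (Xv r k (h k)) Z)" .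
  have "(\<Sum>k\<in>K. l k * (ip r (Xv r k (h k)) Z - zz)) = (\<Sum>k\<in>K. l k * ip r (Xv r k (h k)) Z) - (\<Sum>k\<in>K. l k) * zz"
    by (simp add: right_diff_distrib sum_subtractf sum_distrib_right)
  moreover have "(\<Sum>k\<in>K. l k * ip r (Xv r k (h k)) Z) = zz" using ipZ zzZ by linarith
  moreover have "sum l K = 1" using v unfolding valid_def by blast
  ultimately have s0: "(\<Sum>k\<in>K. l k * (ip r (Xv r k (h k)) Z - zz)) = 0" by simp
  have nn: "l k * (ip r (Xv r k (h k)) Z - zz) \<ge> 0" if k: "k \<in> K" for k
  proof -
    have "ip r (Xv r k (h k)) Z - zz \<ge> 0" using ge[OF k] by simp
    moreover have "l k \<ge> 0" using lpos k by force
    ultimately show "l k * (ip r (Xv r k (h k)) Z - zz) \<ge> 0" by (rule mult_nonneg_nonneg[rotated])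
  qed
  have iff: "(\<Sum>k\<in>K. l k * (ip r (Xv r k (h k)) Z - zz)) = 0 \<longleftrightarrow> (\<forall>k\<in>K. l k * (ip r (Xv r k (h k)) Z - zz) = 0)"
    by (rule sum_nonneg_eq_0_iff[OF fK]) (rule nn)
  have "\<forall>k\<in>K. l k * (ip r (Xv r k (h k)) Z - zz) = 0" using iff s0 by (rule iffD1)
  hence eqk0: "\<forall>k\<in>K. l k = 0 \<or> ip r (Xv r k (h k)) Z = zz" by simp
  have eqk: "\<forall>k\<in>K. ip r (Xv r k (h k)) Z = zz"
  proof
    fix k assume k: "k \<in> K"
    have "l k \<noteq> 0" using lpos k by force
    thus "ip r (Xv r k (h k)) Z = zz" using eqk0 k by blast
  qed
  define E :: "(nat \<times> ('a \<times> real)) set" where "E = {..<r - 1} \<times> Basis"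
  have fE: "finite E" unfolding E_def by auto
  have "card E = (r - 1) * (DIM('a) + 1)" unfolding E_def by (simp add: card_cartesian_product)
  hence cE: "card E < card K" using cK unfolding Tv_def by (simp add: algebra_simps)
  define A :: "nat \<times> ('a \<times> real) \<Rightarrow> 'a \<Rightarrow> real" where
    "A e k = (case e of (i, b) \<Rightarrow> inner (Xv r k (h k) i) b)" for e k
  obtain c where c: "\<exists>k\<in>K. c k \<noteq> 0" "\<forall>e\<in>E. (\<Sum>k\<in>K. A e k * c k) = 0"
    using homog_system_nontrivial[OF fE fK cE, of A] by blast
  define Y where "Y i = (\<Sum>k\<in>K. c k *\<^sub>R Xv r k (h k) i)" for i
  have Y0: "Y i = 0" if "i < r - 1" for i
  proof (rule euclidean_eqI)
    fix b :: "'a \<times> real" assume b: "b \<in> Basis"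
    hence "(i, b) \<in> E" using that unfolding E_def by auto
    hence "(\<Sum>k\<in>K. A (i, b) k * c k) = 0" using c(2) by blast
    thus "inner (Y i) b = inner 0 b" unfolding Y_def A_def by (simp add: inner_sum_left mult.commute)
  qed
  have Ysum: "(\<Sum>i<r. Y i) = 0"
  proof -
    have "(\<Sum>i<r. Y i) = (\<Sum>k\<in>K. c k *\<^sub>R (\<Sum>i<r. Xv r k (h k) i))"
      unfolding Y_def scaleR_sum_right by (rule sum.swap)
    also have "\<dots> = 0" using v Xv_sum_i unfolding valid_def by (intro sum.neutral) auto
    finally show ?thesis .
  qed
  have Yall: "Y i = 0" if "i < r" for i
  proof (cases "i < r - 1")
    case False
    hence ir: "i = r - 1" using that by simp
    obtain m where m: "r = Suc m" using r1 by (cases r) auto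
    have "(\<Sum>i<r. Y i) = (\<Sum>i<m. Y i) + Y m" unfolding m by simp
    also have "(\<Sum>i<m. Y i) = 0" using Y0 m by (intro sum.neutral) auto
    finally show ?thesis using Ysum ir m by simp
  qed (rule Y0)
  have "ip r Y Z = (\<Sum>k\<in>K. c k * ip r (Xv r k (h k)) Z)"
    unfolding Y_def[abs_def] by (rule ip_sum_left[OF fK])
  also have "\<dots> = zz * (\<Sum>k\<in>K. c k)" using eqk by (simp add: sum_distrib_left mult.commute)
  finally have "zz * (\<Sum>k\<in>K. c k) = 0" using Yall unfolding ip_def by simp
  hence csum: "(\<Sum>k\<in>K. c k) = 0" using zpos unfolding zz_def by simp
  obtain k1 where "k1 \<in> K" "c k1 < 0" using exists_neg[OF fK c(1) csum] by blast
  then obtain t k0 where t: "t \<ge> 0" "\<forall>p\<in>K. l p + t * c p \<ge> 0" "k0 \<in> K" "l k0 + t * c k0 = 0"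
    using ratio_step[OF fK lpos] by blast
  define l' where "l' = (\<lambda>k. 1 * l k + t * c k)"
  have "sum l' K = sum l K + t * (\<Sum>k\<in>K. c k)" unfolding l'_def by (simp add: sum.distrib sum_distrib_left)
  hence "valid r K h l'" using v t(2) csum unfolding valid_def l'_def by simp
  moreover have "\<forall>i<r. Tz r K h l' i = Tz r K h l i"
  proof (intro allI impI)
    fix i assume "i < r"
    have "Tz r K h l' i = 1 *\<^sub>R Tz r K h l i + t *\<^sub>R Tz r K h c i" unfolding l'_def by (rule Tz_lin)
    moreover have "Tz r K h c i = Y i" unfolding Tz_def Y_def ..
    ultimately show "Tz r K h l' i = Tz r K h l i" using Yall[OF \<open>i < r\<close>] by simp
  qed
  moreover have "l' k0 = 0" using t(4) unfolding l'_def by simp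
  ultimately show ?thesis using t(3) by blast
qed

lemma zero_tverberg:
  fixes K :: "'a::euclidean_space set"
  assumes fK: "finite K" and r1: "r \<ge> 1" and v: "valid r K h l" and z: "Fv r K h l = 0"
  shows "\<exists>y. \<forall>j<r. y \<in> convex hull {k\<in>K. h k = j}"
proof -
  define Z where "Z = Tz r K h l"
  have "(\<Sum>i<r. inner (Z i) (Z i)) = 0" using z unfolding Fv_def ip_def Z_def .
  hence "\<forall>i\<in>{..<r}. inner (Z i) (Z i) = 0" by (subst (asm) sum_nonneg_eq_0_iff) auto
  hence Z0: "Z i = 0" if "i < r" for i using that by simp
  define Vs where "Vs = (\<Sum>k\<in>K. l k *\<^sub>R (k, 1::real))"
  define V where "V i = (\<Sum>k\<in>{k\<in>K. h k = i}. l k *\<^sub>R (k, 1::real))" for i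
  have ZV: "Z i = V i - (1 / real r) *\<^sub>R Vs" for i
  proof -
    have "Z i = (\<Sum>k\<in>K. (if h k = i then l k else 0) *\<^sub>R (k, 1::real) - (l k / real r) *\<^sub>R (k, 1))"
      unfolding Z_def Tz_def Xv_def by (rule sum.cong) (auto simp: scaleR_diff_left scaleR_diff_right algebra_simps)
    also have "\<dots> = (\<Sum>k\<in>K. (if h k = i then l k else 0) *\<^sub>R (k, 1::real)) - (1 / real r) *\<^sub>R Vs"
    proof -
      have "(\<Sum>k\<in>K. (l k / real r) *\<^sub>R (k, 1::real)) = (1 / real r) *\<^sub>R Vs"
        unfolding Vs_def scaleR_sum_right by (rule sum.cong) auto
      thus ?thesis by (simp only: sum_subtractf)
    qed
    also have "(\<Sum>k\<in>K. (if h k = i then l k else 0) *\<^sub>R (k, 1::real)) = V i"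
      unfolding V_def sum.inter_filter[OF fK] by (rule sum.cong) (auto simp: zero_prod_def)
    finally show ?thesis .
  qed
  have Vi: "V i = (1 / real r) *\<^sub>R Vs" if "i < r" for i using Z0[OF that] ZV[of i] by simp
  define y where "y = (\<Sum>k\<in>K. l k *\<^sub>R k)"
  have sVs: "snd Vs = 1" using v unfolding Vs_def valid_def by (simp add: snd_sum)
  have fVs: "fst Vs = y" unfolding Vs_def y_def by (simp add: fst_sum)
  have "y \<in> convex hull {k\<in>K. h k = j}" if j: "j < r" for j
  proof -
    have s1: "(\<Sum>k\<in>{k\<in>K. h k = j}. l k) = 1 / real r"
      using arg_cong[OF Vi[OF j], of snd] sVs unfolding V_def by (simp add: snd_sum)
    have s2: "(\<Sum>k\<in>{k\<in>K. h k = j}. l k *\<^sub>R k) = (1 / real r) *\<^sub>R y"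
      using arg_cong[OF Vi[OF j], of fst] fVs unfolding V_def by (simp add: fst_sum)
    have rpos: "real r > 0" using r1 by simp
    have "(\<Sum>k\<in>{k\<in>K. h k = j}. real r * l k) = 1"
      using s1 rpos by (simp add: sum_distrib_left[symmetric])
    moreover have "(\<Sum>k\<in>{k\<in>K. h k = j}. (real r * l k) *\<^sub>R k) = y"
    proof -
      have "(\<Sum>k\<in>{k\<in>K. h k = j}. (real r * l k) *\<^sub>R k) = real r *\<^sub>R (\<Sum>k\<in>{k\<in>K. h k = j}. l k *\<^sub>R k)"
        by (simp add: scaleR_sum_right)
      also have "\<dots> = y" using s2 rpos by simp
      finally show ?thesis .
    qed
    moreover have "\<forall>k\<in>{k\<in>K. h k = j}. 0 \<le> real r * l k" using v unfolding valid_def by auto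
    ultimately show ?thesis using fK by (subst convex_hull_finite) auto
  qed
  thus ?thesis by blast
qed

theorem tverberg:
  fixes K :: "'a::euclidean_space set"
  assumes fK: "finite K" and r1: "r \<ge> 1" and cK: "Tv DIM('a) r \<le> card K"
  shows "\<exists>h y. (\<forall>k\<in>K. h k < r) \<and> (\<forall>j<r. y \<in> convex hull {k\<in>K. h k = j})"
proof -
  have "K \<noteq> {}" using cK unfolding Tv_def by auto
  then obtain h l where v: "valid r K h l" and mn: "\<forall>h' l'. valid r K h' l' \<longrightarrow> Fv r K h l \<le> Fv r K h' l'"
    using min_exists[OF fK _ r1] by blast
  show ?thesis
  proof (cases "Fv r K h l = 0")
    case True
    thus ?thesis using zero_tverberg[OF fK r1 v] v unfolding valid_def by blast
  next
    case False
    hence zpos: "Fv r K h l > 0" using ip_nonneg unfolding Fv_def by (metis less_eq_real_def)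
    obtain l' k0 where v': "valid r K h l'" and tz: "\<forall>i<r. Tz r K h l' i = Tz r K h l i"
      and k0: "k0 \<in> K" "l' k0 = 0"
      using reduce[OF fK r1 cK v mn zpos] by blast
    define Z where "Z = Tz r K h l"
    have Feq: "Fv r K h l' = Fv r K h l" unfolding Fv_def by (rule ip_cong) (use tz in auto)
    have "\<exists>j<r. ip r (Xv r k0 j) Z \<le> 0"
    proof (rule ccontr)
      assume "\<not> ?thesis"
      hence pos: "\<forall>j<r. ip r (Xv r k0 j) Z > 0" by auto
      have "(\<Sum>j<r. ip r (Xv r k0 j) Z) > 0"
      proof (rule sum_pos)
        have "0 \<in> {..<r}" using r1 by simp
        thus "{..<r} \<noteq> {}" by blast
      qed (use pos in auto)
      moreover have "(\<Sum>j<r. ip r (Xv r k0 j) Z) = (\<Sum>i<r. inner (\<Sum>j<r. Xv r k0 j i) (Z i))"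
        unfolding ip_def inner_sum_left by (rule sum.swap)
      moreover have "\<dots> = 0" by (rule sum.neutral) (simp add: Xv_sum_j)
      ultimately show False by simp
    qed
    then obtain j where j: "j < r" "ip r (Xv r k0 j) Z \<le> 0" by blast
    define h' where "h' = h(k0 := j)"
    have tz': "Tz r K h' l' = Tz r K h l'"
      unfolding Tz_def h'_def by (intro ext sum.cong) (auto simp: k0)
    have v'': "valid r K h' l'" using v' j unfolding valid_def h'_def by auto
    have mn': "\<forall>h'' l''. valid r K h'' l'' \<longrightarrow> Fv r K h' l' \<le> Fv r K h'' l''"
      using mn Feq unfolding Fv_def tz' by auto
    have "ip r (Xv r k0 (h' k0)) (Tz r K h' l') \<ge> Fv r K h' l'" by (rule opt[OF fK v'' mn' k0(1)])
    moreover have "ip r (Xv r k0 (h' k0)) (Tz r K h' l') = ip r (Xv r k0 j) Z"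
    proof -
      have hk: "h' k0 = j" by (simp add: h'_def)
      have "ip r (Xv r k0 (h' k0)) (Tz r K h' l') = ip r (Xv r k0 j) (Tz r K h l')" by (simp only: tz' hk)
      also have "\<dots> = ip r (Xv r k0 j) Z" unfolding Z_def by (rule ip_cong) (use tz in auto)
      finally show ?thesis .
    qed
    moreover have "Fv r K h' l' = Fv r K h l" unfolding Fv_def tz' using Feq unfolding Fv_def .
    ultimately show ?thesis using j(2) zpos by linarith
  qed
qed




lemma choose_K:
  fixes S C C' :: "'a set"
  assumes fS: "finite S" and CS: "C \<subseteq> S" and C'S: "C' \<subseteq> S"
    and cC: "card C \<le> N" and cC': "card C' \<le> N" and cS: "3 * N - 1 \<le> card S" and N1: "N \<ge> 1"
  shows "\<exists>K. K \<subseteq> S \<and> K \<inter> C' = {} \<and> N \<le> card K \<and> card (K \<inter> C) \<le> 1"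
proof -
  define D where "D = S - (C \<union> C')"
  have fD: "finite D" using fS unfolding D_def by auto
  have fCC: "finite (C \<union> C')" using fS CS C'S finite_subset by blast
  have cD: "card D = card S - card (C \<union> C')" unfolding D_def
    by (rule card_Diff_subset[OF fCC]) (use CS C'S in auto)
  have cU: "card (C \<union> C') \<le> card C + card C'" by (rule card_Un_le)
  have cUS: "card (C \<union> C') \<le> card S" using CS C'S fS by (intro card_mono) auto
  show ?thesis
  proof (cases "N \<le> card D")
    case True
    then obtain K where K: "K \<subseteq> D" "card K = N" using obtain_subset_with_card_n[OF True] by blast
    have "K \<inter> C = {}" using K unfolding D_def by auto
    moreover have "K \<subseteq> S" "K \<inter> C' = {}" using K unfolding D_def by auto
    ultimately show ?thesis using K(2) by (intro exI[of _ K]) simp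
  next
    case False
    have "card (C \<union> C') \<ge> 2 * N" using False cD cS cUS by linarith
    have "\<not> C \<subseteq> C'"
    proof
      assume "C \<subseteq> C'"
      hence "C \<union> C' = C'" by auto
      thus False using \<open>card (C \<union> C') \<ge> 2 * N\<close> cC' N1 by simp
    qed
    then obtain c where c: "c \<in> C" "c \<notin> C'" by blast
    define K where "K = insert c D"
    have "c \<notin> D" using c unfolding D_def by auto
    hence "card K = card D + 1" unfolding K_def using fD by simp
    moreover have "card D \<ge> N - 1" using cD cS cU cC cC' by linarith
    ultimately have "N \<le> card K" using N1 by linarith
    moreover have "K \<inter> C = {c}" unfolding K_def D_def using c by auto
    moreover have "K \<subseteq> S" "K \<inter> C' = {}" unfolding K_def D_def using c CS by auto
    ultimately show ?thesis by (intro exI[of _ K]) simp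
  qed
qed

lemma tverberg_fix:
  fixes K :: "'a::euclidean_space set"
  assumes fK: "finite K" and r1: "r \<ge> 1" and cK: "Tv DIM('a) r \<le> card K"
    and c: "card (K \<inter> C) \<le> 1" and fr: "\<forall>p\<in>C. f p < r"
  shows "\<exists>h y. (\<forall>k\<in>K. h k < r) \<and> (\<forall>j<r. y \<in> convex hull {k\<in>K. h k = j}) \<and> (\<forall>k\<in>K \<inter> C. h k = f k)"
proof -
  obtain h y where h: "\<forall>k\<in>K. h k < r" "\<forall>j<r. y \<in> convex hull {k\<in>K. h k = j}"
    using tverberg[OF fK r1 cK] by blast
  show ?thesis
  proof (cases "K \<inter> C = {}")
    case True
    thus ?thesis using h by blast
  next
    case False
    then obtain c where cKC: "c \<in> K \<inter> C" by blast
    have fKC: "finite (K \<inter> C)" using fK by simp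
    have KC: "K \<inter> C = {c}"
    proof -
      have "card (K \<inter> C) = 1" using c False fKC by (simp add: card_gt_0_iff le_antisym Suc_leI)
      then obtain z where "K \<inter> C = {z}" by (auto simp: card_Suc_eq)
      thus ?thesis using cKC by auto
    qed
    define a where "a = h c"
    define b where "b = f c"
    have ar: "a < r" "b < r" using cKC h(1) fr unfolding a_def b_def by auto
    define \<sigma> where "\<sigma> j = (if j = a then b else if j = b then a else j)" for j
    have ss: "\<sigma> (\<sigma> j) = j" for j unfolding \<sigma>_def by auto
    have sr: "\<sigma> j < r" if "j < r" for j using that ar unfolding \<sigma>_def by auto
    define h2 where "h2 k = \<sigma> (h k)" for k
    have "\<forall>k\<in>K. h2 k < r" using h(1) sr unfolding h2_def by auto
    moreover have "\<forall>j<r. y \<in> convex hull {k\<in>K. h2 k = j}"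
    proof (intro allI impI)
      fix j assume j: "j < r"
      have "{k\<in>K. h2 k = j} = {k\<in>K. h k = \<sigma> j}" unfolding h2_def by (metis ss)
      thus "y \<in> convex hull {k\<in>K. h2 k = j}" using h(2) sr[OF j] by simp
    qed
    moreover have "\<forall>k\<in>K \<inter> C. h2 k = f k" using KC unfolding h2_def \<sigma>_def a_def b_def by auto
    ultimately show ?thesis by blast
  qed
qed

theorem theorem1p3:
  fixes S :: "('a::euclidean_space) set" and r :: nat
  assumes "r \<ge> 1"
    and "finite S"
    and "card S \<ge> 3 * Tv DIM('a) r - 1"
  shows "tverberg_graph_connected S r"
  unfolding tverberg_graph_connected_def
proof (intro allI impI)
  fix P P' assume P: "tverberg_partition S r P" and P': "tverberg_partition S r P'"
  note fS = assms(2) and r1 = assms(1)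
  define N where "N = Tv DIM('a) r"
  have N1: "N \<ge> 1" unfolding N_def Tv_def by simp
  obtain f x where fx: "tvw S r f S x" "parts S r f = P" using partition_labeling[OF fS P] by blast
  obtain f' x' where fx': "tvw S r f' S x'" "parts S r f' = P'" using partition_labeling[OF fS P'] by blast
  obtain C y0 where C: "tvw S r f C y0" "card C \<le> N" using core_lemma[OF fS r1 fx(1)] unfolding N_def by blast
  obtain C' y0' where C': "tvw S r f' C' y0'" "card C' \<le> N" using core_lemma[OF fS r1 fx'(1)] unfolding N_def by blast
  have CS: "C \<subseteq> S" and C'S: "C' \<subseteq> S" using C(1) C'(1) unfolding tvw_def by auto
  have fr: "\<forall>p\<in>S. f p < r" and fr': "\<forall>p\<in>S. f' p < r" using fx(1) fx'(1) unfolding tvw_def by auto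
  obtain K where K: "K \<subseteq> S" "K \<inter> C' = {}" "N \<le> card K" "card (K \<inter> C) \<le> 1"
    using choose_K[OF fS CS C'S C(2) C'(2) _ N1] assms(3) unfolding N_def by blast
  have fK: "finite K" using K(1) fS finite_subset by blast
  have frC: "\<forall>p\<in>C. f p < r" using fr CS by auto
  obtain h y where h: "\<forall>k\<in>K. h k < r" "\<forall>j<r. y \<in> convex hull {k\<in>K. h k = j}" "\<forall>k\<in>K \<inter> C. h k = f k"
    using tverberg_fix[OF fK r1 _ K(4) frC] K(3) unfolding N_def by blast
  define g1 where "g1 p = (if p \<in> K then h p else f p)" for p
  define g2 where "g2 p = (if p \<in> K then h p else f' p)" for p
  have g1r: "\<forall>p\<in>S. g1 p < r" using h(1) fr unfolding g1_def by auto
  have g2r: "\<forall>p\<in>S. g2 p < r" using h(1) fr' unfolding g2_def by auto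
  have s1: "(parts S r f, parts S r g1) \<in> (tverberg_graph_edges S r)\<^sup>*"
    by (rule move_path[OF fS C(1) g1r]) (use h(3) in \<open>auto simp: g1_def\<close>)
  have t1: "tvw S r g1 K y"
  proof -
    have "{p\<in>K. g1 p = j} = {k\<in>K. h k = j}" for j unfolding g1_def by auto
    thus ?thesis unfolding tvw_def using K(1) g1r h(2) by auto
  qed
  have s2: "(parts S r g1, parts S r g2) \<in> (tverberg_graph_edges S r)\<^sup>*"
    by (rule move_path[OF fS t1 g2r]) (auto simp: g1_def g2_def)
  have t2: "tvw S r g2 C' y0'"
  proof -
    have "{p\<in>C'. g2 p = j} = {p\<in>C'. f' p = j}" for j unfolding g2_def using K(2) by auto
    thus ?thesis using C'(1) g2r unfolding tvw_def by auto
  qed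
  have s3: "(parts S r g2, parts S r f') \<in> (tverberg_graph_edges S r)\<^sup>*"
    by (rule move_path[OF fS t2 fr']) (use K(2) in \<open>auto simp: g2_def\<close>)
  show "(P, P') \<in> (tverberg_graph_edges S r)\<^sup>*"
    using s1 s2 s3 fx(2) fx'(2) by (metis rtrancl_trans)
qed


end
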